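(* Let $\gamma$ be a gauge on $\mathbb{R}^d$ with skewness $\sigma$. Let $A\subset\mathbb{R}^d$ be finite with positive weights summing to $1$, let $C\subseteq A$ with $w_C<\frac{1}{1+\sigma}$, and let $D=A\setminus C$. Let $C_c$ be obtained by moving the points of $C$ to arbitrary positions (keeping their weights), and let $x$ be a Fermat–Weber point of the weighted set $D\cup C_c$. Then $x\in\mathrm{EH}_\gamma(D)$.
   Context: A gauge $\gamma$ on $\mathbb{R}^d$ is the Minkowski functional of a convex compact set $B_\gamma$ with the origin in its interior (not necessarily symmetric); $\gamma^\circ(p)=\max\{\langle p,x\rangle:\gamma(x)=1\}$ is the dual gauge with unit ball $B_{\gamma^\circ}$; the skewness is $\sigma=\sup_{x\neq0}\gamma(x)/\gamma(-x)$. A Fermat–Weber point of a finite positively weighted set is a minimizer of $x\mapsto\sum_a w_a\gamma(x-a)$. For $p\in B_{\gamma^\circ}$ define $N(p)$ as follows: if $\gamma^\circ(p)=1$, $N(p)$ is the convex cone $\mathbb{R}_{\ge0}F(p)$ generated by the exposed face $F(p)=\{x\in B_\gamma:\langle p,x\rangle=1\}$ (equivalently $\mathbb{R}_{\ge0}\partial\gamma^\circ(p)$); if $\gamma^\circ(p)<1$, $N(p)=\{0\}$. For a finite set $S$ and a family $\pi=(p_s)_{s\in S}$ of points of $B_{\gamma^\circ}$, let $C_\pi=\bigcap_{s\in S}(s+N(p_s))$; a nonempty such $C_\pi$ is an elementary convex set for $S$. The elementary hull $\mathrm{EH}_\gamma(S)$ is the union of all bounded elementary convex sets for $S$. *)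

theory Defs
  imports "HOL-Analysis.Analysis"
begin

text \<open>A gauge is given by its unit ball B (convex, compact, 0 in the interior).
  mink_gauge B is the Minkowski functional of B.\<close>

definition is_gauge_ball :: "'a::euclidean_space set \<Rightarrow> bool" where
  "is_gauge_ball B \<longleftrightarrow> convex B \<and> compact B \<and> 0 \<in> interior B"

definition mink_gauge :: "'a::euclidean_space set \<Rightarrow> 'a \<Rightarrow> real" where
  "mink_gauge B x = Inf {t. 0 < t \<and> x \<in> (\<lambda>y. t *\<^sub>R y) ` B}"

definition dual_gauge :: "'a::euclidean_space set \<Rightarrow> 'a \<Rightarrow> real" where
  "dual_gauge B p = Sup {p \<bullet> x | x. mink_gauge B x = 1}"

definition dual_ball :: "'a::euclidean_space set \<Rightarrow> 'a set" where
  "dual_ball B = {p. dual_gauge B p \<le> 1}"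

definition skewness :: "'a::euclidean_space set \<Rightarrow> real" where
  "skewness B = Sup {mink_gauge B x / mink_gauge B (-x) | x. x \<noteq> 0}"

definition exposed_face :: "'a::euclidean_space set \<Rightarrow> 'a \<Rightarrow> 'a set" where
  "exposed_face B p = {x \<in> B. p \<bullet> x = 1}"

definition Ncone :: "'a::euclidean_space set \<Rightarrow> 'a \<Rightarrow> 'a set" where
  "Ncone B p = (if dual_gauge B p = 1
      then {t *\<^sub>R x | t x. 0 \<le> t \<and> x \<in> exposed_face B p} else {0})"

definition elem_set :: "'a::euclidean_space set \<Rightarrow> 'a set \<Rightarrow> ('a \<Rightarrow> 'a) \<Rightarrow> 'a set" where
  "elem_set B S p = (\<Inter>s\<in>S. (\<lambda>v. s + v) ` Ncone B (p s))"

definition elementary_hull :: "'a::euclidean_space set \<Rightarrow> 'a set \<Rightarrow> 'a set" where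
  "elementary_hull B S = \<Union> {elem_set B S p | p.
      (\<forall>s\<in>S. p s \<in> dual_ball B) \<and> elem_set B S p \<noteq> {} \<and> bounded (elem_set B S p)}"

text \<open>Fermat--Weber point of a weighted family of points (pos i, w i), i in I
  (a family, so coinciding positions are allowed and weights add up).\<close>
definition fermat_weber_point ::
    "'a::euclidean_space set \<Rightarrow> 'i set \<Rightarrow> ('i \<Rightarrow> 'a) \<Rightarrow> ('i \<Rightarrow> real) \<Rightarrow> 'a \<Rightarrow> bool" where
  "fermat_weber_point B I pos w x \<longleftrightarrow>
     (\<forall>y. (\<Sum>i\<in>I. w i * mink_gauge B (x - pos i)) \<le> (\<Sum>i\<in>I. w i * mink_gauge B (y - pos i)))"

end

theory Submission
  imports Defs
begin

locale gb = fixes B :: "'a::euclidean_space set" assumes gb: "is_gauge_ball B"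
begin

lemma cvx: "convex B" and cpt: "compact B" and zi: "0 \<in> interior B"
  using gb by (auto simp: is_gauge_ball_def)

lemma clo: "closed B" using cpt compact_imp_closed by blast
lemma zB: "0 \<in> B" using zi interior_subset by blast

lemma ex_r: "\<exists>r>0. cball 0 r \<subseteq> B"
proof -
  obtain e where e: "e>0" "ball 0 e \<subseteq> B" using zi mem_interior by blast
  have "cball 0 (e/2) \<subseteq> ball 0 e" using e by (auto simp: subset_iff)
  thus ?thesis using e by (intro exI[of _ "e/2"]) auto
qed

definition r where "r = (SOME r. r>0 \<and> cball 0 r \<subseteq> B)"
lemma r: "r > 0" "cball 0 r \<subseteq> B"
  using someI_ex[OF ex_r] unfolding r_def by auto

definition R where "R = (SOME R. R>0 \<and> (\<forall>x\<in>B. norm x \<le> R))"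
lemma R: "R > 0" "\<And>x. x\<in>B \<Longrightarrow> norm x \<le> R"
proof -
  have "\<exists>R>0. \<forall>x\<in>B. norm x \<le> R" using cpt compact_imp_bounded bounded_pos by blast
  from someI_ex[OF this] show "R > 0" "\<And>x. x\<in>B \<Longrightarrow> norm x \<le> R" unfolding R_def by auto
qed

abbreviation g where "g \<equiv> mink_gauge B"

definition T where "T x = {t. 0 < t \<and> x \<in> (\<lambda>y. t *\<^sub>R y) ` B}"

lemma T_iff: "t \<in> T x \<longleftrightarrow> 0 < t \<and> (1/t) *\<^sub>R x \<in> B"
proof
  assume "t \<in> T x" then obtain y where "0<t" "y\<in>B" "x = t *\<^sub>R y" by (auto simp: T_def)
  thus "0 < t \<and> (1/t) *\<^sub>R x \<in> B" by auto
next
  assume a: "0 < t \<and> (1/t) *\<^sub>R x \<in> B"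
  hence "x = t *\<^sub>R ((1/t) *\<^sub>R x)" by auto
  thus "t \<in> T x" using a unfolding T_def by blast
qed

lemma g_def': "g x = Inf (T x)" unfolding mink_gauge_def T_def by simp

lemma T_up: assumes "t \<in> T x" "t \<le> s" shows "s \<in> T x"
proof -
  have t: "0<t" "(1/t) *\<^sub>R x \<in> B" using assms T_iff by auto
  have "(t/s) *\<^sub>R ((1/t) *\<^sub>R x) + (1 - t/s) *\<^sub>R 0 \<in> B"
    using t assms convexD[OF cvx t(2) zB, of "t/s" "1 - t/s"] by auto
  moreover have "(t/s) *\<^sub>R ((1/t) *\<^sub>R x) + (1 - t/s) *\<^sub>R 0 = (1/s) *\<^sub>R x" using t by simp
  ultimately show ?thesis using t assms T_iff by auto
qed

lemma T_ne: "norm x / r + 1 \<in> T x"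
proof -
  let ?t = "norm x / r + 1"
  have "norm x / r \<ge> 0" using r by simp
  hence tp: "?t > 0" by linarith
  have "norm ((1/?t) *\<^sub>R x) = norm x / ?t" using tp by simp
  also have "\<dots> \<le> r" using r tp by (simp add: divide_le_eq field_simps)
  finally show ?thesis using r tp T_iff by auto
qed

lemma T_bdd: "bdd_below (T x)" unfolding bdd_below_def T_def by (rule exI[of _ 0]) auto

lemma g_nonneg: "g x \<ge> 0"
  unfolding g_def' by (rule cInf_greatest) (use T_ne[of x] in \<open>auto simp: T_iff\<close>)

lemma g_le_iff: assumes "t > 0" shows "g x \<le> t \<longleftrightarrow> (1/t) *\<^sub>R x \<in> B"
proof
  assume "(1/t) *\<^sub>R x \<in> B" hence "t \<in> T x" using assms T_iff by auto
  thus "g x \<le> t" unfolding g_def' using T_bdd cInf_lower by blast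
next
  assume le: "g x \<le> t"
  have all: "s \<in> T x" if "s > t" for s
  proof -
    have "Inf (T x) < s" using le that g_def' by simp
    then obtain u where "u \<in> T x" "u < s" using cInf_lessD T_ne by blast
    thus ?thesis using T_up by auto
  qed
  define f where "f n = (1 / (t + 1/Suc n)) *\<^sub>R x" for n :: nat
  have "\<forall>n. f n \<in> B" using all[of "t + 1/Suc _"] T_iff unfolding f_def by auto
  moreover have "f \<longlonglongrightarrow> (1/t) *\<^sub>R x"
  proof -
    have L: "(\<lambda>n. t + 1/real (Suc n)) \<longlonglongrightarrow> t"
      using tendsto_add[OF tendsto_const[of t] LIMSEQ_inverse_real_of_nat] by (simp add: inverse_eq_divide)
    have "(\<lambda>n. 1 / (t + 1/real (Suc n))) \<longlonglongrightarrow> 1 / t"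
      using tendsto_divide[OF tendsto_const[of 1] L] assms by simp
    thus ?thesis unfolding f_def by (rule tendsto_scaleR[OF _ tendsto_const])
  qed
  ultimately show "(1/t) *\<^sub>R x \<in> B" using closed_sequentially[OF clo] by blast
qed

lemma g_le_1: "g x \<le> 1 \<longleftrightarrow> x \<in> B" using g_le_iff[of 1] by simp

lemma g_upper: "g x \<le> norm x / r"
proof (cases "x = 0")
  case True
  have "g x \<le> t" if "t>0" for t using g_le_iff[OF that] True zB by simp
  hence "g x \<le> 0" by (metis dense_le_bounded less_eq_real_def not_less) 
  then show ?thesis using True by simp
next
  case False
  hence p: "norm x / r > 0" using r by simp
  have "norm ((1 / (norm x / r)) *\<^sub>R x) = r" using False r by simp
  thus ?thesis using g_le_iff[OF p] r by auto
qed

lemma g_lower: "norm x \<le> R * g x"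
proof (rule field_le_epsilon)
  fix e :: real assume e: "e > 0"
  let ?t = "g x + e / R"
  have tp: "?t > 0" using g_nonneg e R by (simp add: add_nonneg_pos)
  have "e/R > 0" using e R by simp
  hence "(1/?t) *\<^sub>R x \<in> B" using g_le_iff[OF tp, of x] by simp
  hence "norm ((1/?t) *\<^sub>R x) \<le> R" using R(2) by blast
  moreover have "norm ((1/?t) *\<^sub>R x) = norm x / ?t" using tp by simp
  ultimately have "norm x / ?t \<le> R" using tp by (simp add: abs_of_pos)
  hence "norm x \<le> R * ?t" using tp by (simp add: divide_le_eq mult.commute)
  thus "norm x \<le> R * g x + e" using R by (simp add: algebra_simps)
qed

lemma g_zero: "g 0 = 0" using g_upper[of 0] g_nonneg[of 0] by simp

lemma g_pos: "x \<noteq> 0 \<Longrightarrow> g x > 0"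
  using g_lower[of x] g_nonneg[of x] R by (metis mult_zero_right norm_le_zero_iff order_less_le)

lemma eq_from_le: assumes "a \<ge> 0" "b \<ge> 0" "\<And>t. t>0 \<Longrightarrow> a \<le> t \<longleftrightarrow> b \<le> (t::real)" shows "a = b"
proof (rule ccontr)
  assume "a \<noteq> b"
  then consider "a < b" | "b < a" by linarith
  then show False
  proof cases
    case 1 then show ?thesis using assms(3)[of "(a+b)/2"] assms(1) by auto
  next
    case 2 then show ?thesis using assms(3)[of "(a+b)/2"] assms(2) by auto
  qed
qed

lemma g_homog: assumes "c \<ge> 0" shows "g (c *\<^sub>R x) = c * g x"
proof (cases "c = 0")
  case True then show ?thesis using g_zero by simp
next
  case False
  hence c: "c > 0" using assms by simp
  show ?thesis
  proof (rule eq_from_le)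
    show "0 \<le> g (c *\<^sub>R x)" "0 \<le> c * g x" using g_nonneg c by auto
    fix t :: real assume t: "t > 0"
    have "g (c *\<^sub>R x) \<le> t \<longleftrightarrow> (1/t) *\<^sub>R (c *\<^sub>R x) \<in> B" using g_le_iff[OF t] .
    also have "\<dots> \<longleftrightarrow> (1/(t/c)) *\<^sub>R x \<in> B" using c by simp
    also have "\<dots> \<longleftrightarrow> g x \<le> t/c" using g_le_iff[of "t/c"] c t by simp
    also have "\<dots> \<longleftrightarrow> c * g x \<le> t" using c by (simp add: le_divide_eq mult.commute)
    finally show "g (c *\<^sub>R x) \<le> t \<longleftrightarrow> c * g x \<le> t" .
  qed
qed

lemma g_subadd: "g (a + b) \<le> g a + g b"
proof (rule field_le_epsilon)
  fix e :: real assume e: "e > 0"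
  define s where "s = g a + e/2"
  define t where "t = g b + e/2"
  have sp: "s > 0" and tp: "t > 0" using g_nonneg e by (auto simp: s_def t_def add_nonneg_pos)
  have as: "(1/s) *\<^sub>R a \<in> B" using g_le_iff[OF sp, of a] e by (simp add: s_def)
  have bt: "(1/t) *\<^sub>R b \<in> B" using g_le_iff[OF tp, of b] e by (simp add: t_def)
  have "(s/(s+t)) *\<^sub>R ((1/s) *\<^sub>R a) + (t/(s+t)) *\<^sub>R ((1/t) *\<^sub>R b) \<in> B"
    using convexD[OF cvx as bt, of "s/(s+t)" "t/(s+t)"] sp tp by (simp add: add_divide_distrib[symmetric])
  moreover have "(s/(s+t)) *\<^sub>R ((1/s) *\<^sub>R a) + (t/(s+t)) *\<^sub>R ((1/t) *\<^sub>R b) = (1/(s+t)) *\<^sub>R (a + b)"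
    using sp tp by (simp add: scaleR_add_right)
  ultimately have "g (a+b) \<le> s + t" using g_le_iff[of "s+t"] sp tp by simp
  thus "g (a+b) \<le> g a + g b + e" by (simp add: s_def t_def)
qed

lemma g_lip: "\<bar>g a - g b\<bar> \<le> norm (a - b) / r"
proof -
  have "g a \<le> g b + g (a - b)" using g_subadd[of b "a - b"] by simp
  moreover have "g b \<le> g a + g (b - a)" using g_subadd[of a "b - a"] by simp
  moreover have "g (b - a) \<le> norm (a - b) / r" using g_upper[of "b-a"] by (simp add: norm_minus_commute)
  ultimately have "g a - g b \<le> norm (a - b) / r" "g b - g a \<le> norm (a - b) / r"
    using g_upper[of "a-b"] by linarith+
  thus ?thesis by (simp add: abs_le_iff)
qed

lemma g_cont: "continuous_on UNIV g"
proof -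
  have "(1/r)-lipschitz_on UNIV g"
    by (rule lipschitz_onI) (use g_lip r in \<open>auto simp: dist_real_def dist_norm\<close>)
  thus ?thesis using lipschitz_on_continuous_on by blast
qed


lemma g_unit: "x \<noteq> 0 \<Longrightarrow> g ((1 / g x) *\<^sub>R x) = 1"
  using g_homog[of "1/g x" x] g_pos[of x] by simp

definition dP where "dP p \<longleftrightarrow> (\<forall>u. p \<bullet> u \<le> g u)"

lemma sph_compact: "compact {x. g x = 1}"
proof -
  have "closed {x. g x = 1}" by (rule closed_Collect_eq[OF g_cont continuous_on_const])
  moreover have "{x. g x = 1} \<subseteq> B"
  proof
    fix x assume "x \<in> {x. g x = 1}" thus "x \<in> B" using g_le_1[of x] by simp
  qed
  hence "bounded {x. g x = 1}"
    using bounded_subset[OF compact_imp_bounded[OF cpt]] by blast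
  ultimately show ?thesis using compact_eq_bounded_closed by blast
qed

lemma sph_ne: "{x. g x = 1} \<noteq> {}"
proof -
  obtain b :: 'a where "b \<in> Basis" using nonempty_Basis by blast
  hence "b \<noteq> 0" by auto
  hence "(1 / g b) *\<^sub>R b \<in> {x. g x = 1}" using g_unit[of b] by simp
  thus ?thesis by blast
qed

lemma dual_att: "\<exists>x0. g x0 = 1 \<and> dual_gauge B p = p \<bullet> x0 \<and> (\<forall>x. g x = 1 \<longrightarrow> p \<bullet> x \<le> p \<bullet> x0)"
proof -
  have "continuous_on {x. g x = 1} (\<lambda>x. p \<bullet> x)" by (intro continuous_intros)
  then obtain x0 where x0: "x0 \<in> {x. g x = 1}" "\<forall>y\<in>{x. g x = 1}. p \<bullet> y \<le> p \<bullet> x0"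
    using continuous_attains_sup[OF sph_compact sph_ne] by blast
  have "dual_gauge B p = p \<bullet> x0" unfolding dual_gauge_def
    by (rule cSup_eq_maximum) (use x0 in auto)
  thus ?thesis using x0 by auto
qed

lemma dP_le: assumes "dP p" shows "dual_gauge B p \<le> 1"
proof -
  obtain x0 where "g x0 = 1" "dual_gauge B p = p \<bullet> x0" using dual_att by blast
  thus ?thesis using assms unfolding dP_def by metis
qed

lemma dP_ball: "dP p \<Longrightarrow> p \<in> dual_ball B"
  using dP_le unfolding dual_ball_def by auto

lemma dP_eq1: assumes "dP p" "y \<noteq> 0" "p \<bullet> y = g y" shows "dual_gauge B p = 1"
proof -
  obtain x0 where x0: "g x0 = 1" "dual_gauge B p = p \<bullet> x0" "\<forall>x. g x = 1 \<longrightarrow> p \<bullet> x \<le> p \<bullet> x0"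
    using dual_att by blast
  have "p \<bullet> ((1 / g y) *\<^sub>R y) = 1" using assms g_pos[of y] by simp
  hence "1 \<le> dual_gauge B p" using x0 g_unit[OF assms(2)] by metis
  thus ?thesis using dP_le[OF assms(1)] by simp
qed

lemma face_ne: assumes "dual_gauge B p = 1" shows "exposed_face B p \<noteq> {}"
proof -
  obtain x0 where x0: "g x0 = 1" "dual_gauge B p = p \<bullet> x0"
    using dual_att by blast
  hence "x0 \<in> exposed_face B p" using assms g_le_1[of x0] unfolding exposed_face_def by auto
  thus ?thesis by blast
qed

lemma dP_of_B: assumes "\<And>y. y \<in> B \<Longrightarrow> p \<bullet> y \<le> 1" shows "dP p"
  unfolding dP_def
proof
  fix u
  show "p \<bullet> u \<le> g u"
  proof (rule field_le_epsilon)
    fix e :: real assume e: "e > 0"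
    let ?t = "g u + e"
    have tp: "?t > 0" using g_nonneg[of u] e by linarith
    have "(1/?t) *\<^sub>R u \<in> B" using g_le_iff[OF tp, of u] e by simp
    hence "p \<bullet> ((1/?t) *\<^sub>R u) \<le> 1" using assms by blast
    hence "(p \<bullet> u) / ?t \<le> 1" by simp
    thus "p \<bullet> u \<le> g u + e" using tp by (simp add: divide_le_eq)
  qed
qed

lemma not_int: assumes gz0: "g z0 = 1" shows "z0 \<notin> interior B"
proof
  assume "z0 \<in> interior B"
  then obtain e where e: "e > 0" "ball z0 e \<subseteq> B" using mem_interior by blast
  have z0n: "z0 \<noteq> 0" using gz0 g_zero by auto
  define d where "d = e / (2 * norm z0)"
  have dp: "d > 0" using e z0n by (simp add: d_def)
  have "(1 + d) *\<^sub>R z0 - z0 = d *\<^sub>R z0" by (simp add: scaleR_add_left)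
  moreover have "dist z0 ((1 + d) *\<^sub>R z0) = norm ((1 + d) *\<^sub>R z0 - z0)" by (metis dist_commute dist_norm)
  ultimately have "dist z0 ((1 + d) *\<^sub>R z0) = d * norm z0" using dp by simp
  also have "\<dots> = e/2" using z0n by (simp add: d_def)
  also have "\<dots> < e" using e by simp
  finally have "(1 + d) *\<^sub>R z0 \<in> ball z0 e" by simp
  hence "(1 + d) *\<^sub>R z0 \<in> B" using e by blast
  hence "g ((1 + d) *\<^sub>R z0) \<le> 1" using g_le_1 by blast
  moreover have "g ((1 + d) *\<^sub>R z0) = 1 + d" using g_homog[of "1+d" z0] dp gz0 by simp
  ultimately show False using dp by simp
qed

lemma support: "\<exists>p. dP p \<and> p \<bullet> z = g z"
proof (cases "z = 0")
  case True
  then show ?thesis using g_zero g_nonneg by (intro exI[of _ 0]) (auto simp: dP_def)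
next
  case False
  define z0 where "z0 = (1 / g z) *\<^sub>R z"
  have gz0: "g z0 = 1" using g_unit[OF False] z0_def by simp
  hence z0B: "z0 \<in> B" using g_le_1[of z0] by simp
  have "z0 \<notin> interior B" using not_int[OF gz0] .
  moreover have "interior B \<noteq> {}" using zi by blast
  hence "rel_interior B = interior B" by (rule rel_interior_nonempty_interior)
  ultimately have nz: "z0 \<notin> rel_interior B" by simp
  obtain a where a1: "a \<noteq> 0" and a2: "\<And>y. y \<in> B \<Longrightarrow> a \<bullet> z0 \<le> a \<bullet> y"
      and "\<And>y. y \<in> rel_interior B \<Longrightarrow> a \<bullet> z0 < a \<bullet> y"
    by (metis supporting_hyperplane_rel_boundary[OF cvx z0B nz])
  note a = a1 a2
  define q where "q = - a"
  have q: "q \<noteq> 0" "\<And>y. y \<in> B \<Longrightarrow> q \<bullet> y \<le> q \<bullet> z0" using a by (auto simp: q_def)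
  have "norm ((r / norm q) *\<^sub>R q) = r" using r q(1) by simp
  hence "(r / norm q) *\<^sub>R q \<in> cball 0 r" by simp
  hence "(r / norm q) *\<^sub>R q \<in> B" using r(2) by blast
  hence "q \<bullet> ((r / norm q) *\<^sub>R q) \<le> q \<bullet> z0" using q by blast
  moreover have "q \<bullet> q = norm q * norm q" by (simp add: power2_norm_eq_inner[symmetric] power2_eq_square)
  hence "q \<bullet> ((r / norm q) *\<^sub>R q) = r * norm q" using q(1) by simp
  moreover have "r * norm q > 0" using r q(1) by simp
  ultimately have qz: "q \<bullet> z0 > 0" by linarith
  define p where "p = (1 / (q \<bullet> z0)) *\<^sub>R q"
  have "dP p"
  proof (rule dP_of_B)
    fix y assume "y \<in> B"
    hence "q \<bullet> y \<le> q \<bullet> z0" using q by blast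
    thus "p \<bullet> y \<le> 1" using qz by (simp add: p_def divide_le_eq)
  qed
  moreover have "p \<bullet> z0 = 1" using qz by (simp add: p_def)
  hence "(1 / g z) * (p \<bullet> z) = 1" by (simp add: z0_def)
  hence "p \<bullet> z = g z" using g_pos[OF False] by (simp add: field_simps)
  ultimately show ?thesis by blast
qed

lemma dP_norm: assumes "dP p" shows "norm p \<le> 1 / r"
proof (cases "p = 0")
  case True then show ?thesis using r by simp
next
  case False
  let ?u = "(r / norm p) *\<^sub>R p"
  have "p \<bullet> p = norm p * norm p" by (simp add: power2_norm_eq_inner[symmetric] power2_eq_square)
  hence "p \<bullet> ?u = r * norm p" using False by simp
  moreover have "p \<bullet> ?u \<le> g ?u" using assms dP_def by blast
  moreover have "g ?u \<le> norm ?u / r" by (rule g_upper)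
  moreover have "norm ?u = r" using False r by simp
  ultimately have "r * norm p \<le> 1" using r by simp
  thus ?thesis using r by (simp add: le_divide_eq mult.commute)
qed

lemma P_compact: "compact {p. dP p}"
proof -
  have "{p. dP p} = (\<Inter>u. {p. u \<bullet> p \<le> g u})" by (auto simp: dP_def inner_commute)
  hence "closed {p. dP p}" by (simp add: closed_INT closed_halfspace_le)
  moreover have "bounded {p. dP p}" using dP_norm unfolding bounded_iff by blast
  ultimately show ?thesis using compact_eq_bounded_closed by blast
qed

lemma P_convex: "convex {p. dP p}"
proof (rule convexI)
  fix x y :: 'a and u v :: real
  assume a: "x \<in> {p. dP p}" "y \<in> {p. dP p}" "0 \<le> u" "0 \<le> v" "u + v = 1"
  have "(u *\<^sub>R x + v *\<^sub>R y) \<bullet> w \<le> g w" for w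
  proof -
    have "u * (x \<bullet> w) \<le> u * g w" "v * (y \<bullet> w) \<le> v * g w"
      using a by (auto simp: dP_def intro!: mult_left_mono)
    hence "u * (x \<bullet> w) + v * (y \<bullet> w) \<le> (u + v) * g w" by (simp add: algebra_simps)
    thus ?thesis using a by (simp add: inner_add_left)
  qed
  thus "u *\<^sub>R x + v *\<^sub>R y \<in> {p. dP p}" by (simp add: dP_def)
qed

lemma skew: "skewness B \<ge> 0" "g (- z) \<le> skewness B * g z"
proof -
  let ?Q = "{g x / g (-x) | x. x \<noteq> 0}"
  have bdd: "bdd_above ?Q"
    unfolding bdd_above_def
  proof (intro exI[of _ "R / r"] ballI, clarsimp)
    fix x :: 'a assume x: "x \<noteq> 0"
    have "norm x \<le> R * g (-x)" using g_lower[of "-x"] by simp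
    hence l: "norm x / R \<le> g (-x)" using R by (simp add: divide_le_eq mult.commute)
    have gp: "g (-x) > 0" using g_pos x by simp
    have "g x / g (-x) \<le> (norm x / r) / g (-x)"
      using g_upper[of x] gp by (intro divide_right_mono) auto
    also have "\<dots> \<le> (norm x / r) / (norm x / R)"
      using l x r R gp by (intro divide_left_mono) auto
    also have "\<dots> = R / r" using x by simp
    finally show "g x / g (-x) \<le> R / r" .
  qed
  obtain b :: 'a where "b \<in> Basis" using nonempty_Basis by blast
  hence b: "b \<noteq> 0" by auto
  have "0 \<le> g b / g (-b)" using g_nonneg by simp
  also have "\<dots> \<le> skewness B" unfolding skewness_def by (rule cSup_upper) (use b bdd in auto)
  finally show "skewness B \<ge> 0" .
  show "g (- z) \<le> skewness B * g z"
  proof (cases "z = 0")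
    case True then show ?thesis using g_zero by simp
  next
    case False
    have "g (-z) / g z \<le> skewness B" unfolding skewness_def
      by (rule cSup_upper) (use False bdd in \<open>auto intro!: exI[of _ "-z"]\<close>)
    thus ?thesis using g_pos[OF False] by (simp add: divide_le_eq)
  qed
qed


definition KS :: "'i set \<Rightarrow> ('i \<Rightarrow> real) \<Rightarrow> ('i \<Rightarrow> 'a) \<Rightarrow> ('a \<times> real) set" where
  "KS I w y = {((\<Sum>i\<in>I. w i *\<^sub>R p i), (\<Sum>i\<in>I. w i * (p i \<bullet> y i))) | p. \<forall>i\<in>I. dP (p i)}"

lemma KS_insert: assumes "j \<notin> I" "finite I"
  shows "KS (insert j I) w y = {a + b | a b. a \<in> (\<lambda>p. (w j *\<^sub>R p, w j * (p \<bullet> y j))) ` {p. dP p} \<and> b \<in> KS I w y}"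
    (is "?L = ?R")
proof
  show "?L \<subseteq> ?R"
  proof
    fix k assume "k \<in> ?L"
    then obtain p where p: "\<forall>i\<in>insert j I. dP (p i)"
      "k = ((\<Sum>i\<in>insert j I. w i *\<^sub>R p i), (\<Sum>i\<in>insert j I. w i * (p i \<bullet> y i)))"
      unfolding KS_def by blast
    have "k = (w j *\<^sub>R p j, w j * (p j \<bullet> y j)) + ((\<Sum>i\<in>I. w i *\<^sub>R p i), (\<Sum>i\<in>I. w i * (p i \<bullet> y i)))"
      using p(2) assms by simp
    moreover have "((\<Sum>i\<in>I. w i *\<^sub>R p i), (\<Sum>i\<in>I. w i * (p i \<bullet> y i))) \<in> KS I w y"
      using p(1) unfolding KS_def by blast
    moreover have "(w j *\<^sub>R p j, w j * (p j \<bullet> y j)) \<in> (\<lambda>p. (w j *\<^sub>R p, w j * (p \<bullet> y j))) ` {p. dP p}"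
      using p(1) by blast
    ultimately show "k \<in> ?R" by blast
  qed
next
  show "?R \<subseteq> ?L"
  proof
    fix k assume "k \<in> ?R"
    then obtain p0 q where pq: "dP p0" "\<forall>i\<in>I. dP (q i)"
      "k = (w j *\<^sub>R p0, w j * (p0 \<bullet> y j)) + ((\<Sum>i\<in>I. w i *\<^sub>R q i), (\<Sum>i\<in>I. w i * (q i \<bullet> y i)))"
      unfolding KS_def by blast
    define p where "p = q(j := p0)"
    have s1: "(\<Sum>i\<in>I. w i *\<^sub>R p i) = (\<Sum>i\<in>I. w i *\<^sub>R q i)"
      using assms by (intro sum.cong) (auto simp: p_def)
    have s2: "(\<Sum>i\<in>I. w i * (p i \<bullet> y i)) = (\<Sum>i\<in>I. w i * (q i \<bullet> y i))"
      using assms by (intro sum.cong) (auto simp: p_def)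
    have pd: "\<forall>i\<in>insert j I. dP (p i)" using pq by (auto simp: p_def)
    have "k = ((\<Sum>i\<in>insert j I. w i *\<^sub>R p i), (\<Sum>i\<in>insert j I. w i * (p i \<bullet> y i)))"
      using pq(3) assms s1 s2 by (simp add: p_def)
    thus "k \<in> ?L" using pd unfolding KS_def by blast
  qed
qed

lemma KS_compact: assumes "finite I" shows "compact (KS I w y)"
  using assms
proof (induction I rule: finite_induct)
  case empty
  have "KS {} w y = {(0, 0)}" unfolding KS_def using support[of 0] by auto
  then show ?case by simp
next
  case (insert j I)
  have "compact ((\<lambda>p. (w j *\<^sub>R p, w j * (p \<bullet> y j))) ` {p. dP p})"
    by (rule compact_continuous_image[OF _ P_compact]) (intro continuous_intros)
  then show ?case using KS_insert[OF insert(2,1)] compact_sums[OF _ insert(3)] by simp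
qed

lemma KS_convex: "convex (KS I w y)"
proof (rule convexI)
  fix k1 k2 and u v :: real
  assume k: "k1 \<in> KS I w y" "k2 \<in> KS I w y" and uv0: "0 \<le> u" "0 \<le> v" "u + v = 1"
  have uv: "0 \<le> u \<and> 0 \<le> v \<and> u + v = 1" using uv0 by simp
  obtain p where p: "\<forall>i\<in>I. dP (p i)" "k1 = ((\<Sum>i\<in>I. w i *\<^sub>R p i), (\<Sum>i\<in>I. w i * (p i \<bullet> y i)))"
    using k(1) unfolding KS_def by blast
  obtain q where q: "\<forall>i\<in>I. dP (q i)" "k2 = ((\<Sum>i\<in>I. w i *\<^sub>R q i), (\<Sum>i\<in>I. w i * (q i \<bullet> y i)))"
    using k(2) unfolding KS_def by blast
  define m where "m i = u *\<^sub>R p i + v *\<^sub>R q i" for i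
  have "\<forall>i\<in>I. dP (m i)"
  proof
    fix i assume "i \<in> I"
    hence "p i \<in> {p. dP p}" "q i \<in> {p. dP p}" using p q by auto
    hence "m i \<in> {p. dP p}" using convexD[OF P_convex] uv unfolding m_def by blast
    thus "dP (m i)" by simp
  qed
  moreover have "u *\<^sub>R k1 + v *\<^sub>R k2 = ((\<Sum>i\<in>I. w i *\<^sub>R m i), (\<Sum>i\<in>I. w i * (m i \<bullet> y i)))"
    unfolding p(2) q(2) m_def
    by (simp add: scaleR_sum_right sum_distrib_left sum.distrib[symmetric] algebra_simps inner_add_left)
  ultimately show "u *\<^sub>R k1 + v *\<^sub>R k2 \<in> KS I w y" unfolding KS_def by blast
qed


lemma opt:
  fixes I :: "'i set" and a :: "'i \<Rightarrow> 'a"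
  assumes fin: "finite I" and wp: "\<forall>i\<in>I. 0 < w i"
    and min: "\<And>z. (\<Sum>i\<in>I. w i * g (x - a i)) \<le> (\<Sum>i\<in>I. w i * g (z - a i))"
  shows "\<exists>p. (\<forall>i\<in>I. dP (p i) \<and> p i \<bullet> (x - a i) = g (x - a i)) \<and> (\<Sum>i\<in>I. w i *\<^sub>R p i) = 0"
proof -
  define y where "y i = x - a i" for i
  define f where "f = (\<Sum>i\<in>I. w i * g (y i))"
  have f0: "f \<ge> 0" unfolding f_def using wp g_nonneg by (intro sum_nonneg) auto
  have mem: "(0, f) \<in> KS I w y"
  proof (rule ccontr)
    assume "(0, f) \<notin> KS I w y"
    then obtain aa bb where ab: "aa \<bullet> (0, f) < bb" "\<forall>k\<in>KS I w y. aa \<bullet> k > bb"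
      using separating_hyperplane_closed_point[OF KS_convex compact_imp_closed[OF KS_compact[OF fin]]]
      by blast
    obtain d l where aa: "aa = (d, l)" by (cases aa)
    have "\<forall>i. \<exists>p. dP p \<and> p \<bullet> (- (d + l *\<^sub>R y i)) = g (- (d + l *\<^sub>R y i))" using support by blast
    then obtain p where p: "\<And>i. dP (p i)" "\<And>i. p i \<bullet> (- (d + l *\<^sub>R y i)) = g (- (d + l *\<^sub>R y i))"
      by metis
    have "((\<Sum>i\<in>I. w i *\<^sub>R p i), (\<Sum>i\<in>I. w i * (p i \<bullet> y i))) \<in> KS I w y"
      using p(1) unfolding KS_def by blast
    hence "aa \<bullet> ((\<Sum>i\<in>I. w i *\<^sub>R p i), (\<Sum>i\<in>I. w i * (p i \<bullet> y i))) > bb" using ab by blast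
    moreover have "aa \<bullet> ((\<Sum>i\<in>I. w i *\<^sub>R p i), (\<Sum>i\<in>I. w i * (p i \<bullet> y i)))
        = (\<Sum>i\<in>I. w i * (p i \<bullet> (d + l *\<^sub>R y i)))"
      unfolding aa by (simp add: inner_sum_right sum_distrib_left sum.distrib[symmetric] algebra_simps inner_add_right inner_commute)
    moreover have "\<And>i. p i \<bullet> (d + l *\<^sub>R y i) = - g (- (d + l *\<^sub>R y i))"
      using p(2) by (metis inner_minus_right minus_minus)
    ultimately have "(\<Sum>i\<in>I. w i * g (- (d + l *\<^sub>R y i))) < - (l * f)"
      using ab(1) aa by (simp add: sum_negf)
    moreover have "(\<Sum>i\<in>I. w i * g (- (d + l *\<^sub>R y i))) \<ge> 0"
      using wp g_nonneg by (intro sum_nonneg) auto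
    ultimately have lf: "l * f < 0" by linarith
    hence lneg: "l < 0" using f0 by (metis mult_nonneg_nonneg not_le)
    define mu where "mu = - l"
    have mu: "mu > 0" using lneg mu_def by simp
    define z where "z = x - (1/mu) *\<^sub>R d"
    have eq: "- (d + l *\<^sub>R y i) = mu *\<^sub>R (z - a i)" for i
      using mu by (simp add: mu_def z_def y_def algebra_simps)
    have "(\<Sum>i\<in>I. w i * g (- (d + l *\<^sub>R y i))) = mu * (\<Sum>i\<in>I. w i * g (z - a i))"
    proof -
      have h: "\<And>i. g (mu *\<^sub>R (z - a i)) = mu * g (z - a i)" using mu g_homog by simp
      show ?thesis unfolding eq h by (simp add: sum_distrib_left algebra_simps)
    qed
    hence "mu * (\<Sum>i\<in>I. w i * g (z - a i)) < mu * f"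
      using \<open>(\<Sum>i\<in>I. w i * g (- (d + l *\<^sub>R y i))) < - (l * f)\<close> by (simp add: mu_def)
    hence "(\<Sum>i\<in>I. w i * g (z - a i)) < f" using mu by simp
    thus False using min[of z] unfolding f_def y_def by simp
  qed
  then obtain p where p: "\<forall>i\<in>I. dP (p i)" "(\<Sum>i\<in>I. w i *\<^sub>R p i) = 0"
    "(\<Sum>i\<in>I. w i * (p i \<bullet> y i)) = f"
    unfolding KS_def by auto
  have le: "w i * (p i \<bullet> y i) \<le> w i * g (y i)" if "i \<in> I" for i
    using p(1) that wp by (intro mult_left_mono) (auto simp: dP_def less_imp_le)
  have "w i * (p i \<bullet> y i) = w i * g (y i)" if "i \<in> I" for i
    by (rule sum_mono_inv[OF p(3)[unfolded f_def] le that fin])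
  hence "p i \<bullet> y i = g (y i)" if "i \<in> I" for i using that wp by (metis less_irrefl mult_cancel_left)
  thus ?thesis using p unfolding y_def by blast
qed


lemma ncone_mem: assumes "dP p" "p \<bullet> y = g y" shows "y \<in> Ncone B p"
proof (cases "y = 0")
  case True
  show ?thesis
  proof (cases "dual_gauge B p = 1")
    case True
    then obtain u where "u \<in> exposed_face B p" using face_ne by blast
    hence "0 \<in> {t *\<^sub>R x | t x. 0 \<le> t \<and> x \<in> exposed_face B p}"
      by (intro CollectI exI[of _ 0] exI[of _ u]) auto
    thus ?thesis using True \<open>y = 0\<close> unfolding Ncone_def by simp
  next
    case False thus ?thesis using True unfolding Ncone_def by simp
  qed
next
  case False
  have d1: "dual_gauge B p = 1" using dP_eq1[OF assms(1) False assms(2)] .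
  define u where "u = (1 / g y) *\<^sub>R y"
  have gy: "g y > 0" using g_pos[OF False] .
  have "g u = 1" using g_unit[OF False] u_def by simp
  hence "u \<in> B" using g_le_1[of u] by simp
  moreover have "p \<bullet> u = 1" using assms(2) gy by (simp add: u_def)
  ultimately have "u \<in> exposed_face B p" unfolding exposed_face_def by simp
  moreover have "y = g y *\<^sub>R u" using gy by (simp add: u_def)
  ultimately have "y \<in> {t *\<^sub>R x | t x. 0 \<le> t \<and> x \<in> exposed_face B p}"
    using gy by (intro CollectI exI[of _ "g y"] exI[of _ u]) auto
  thus ?thesis using d1 unfolding Ncone_def by simp
qed

lemma ncone_prop: assumes "dP p" "v \<in> Ncone B p" shows "p \<bullet> v = g v"
proof (cases "dual_gauge B p = 1")
  case True
  then obtain t u where tu: "0 \<le> t" "u \<in> B" "p \<bullet> u = 1" "v = t *\<^sub>R u"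
    using assms(2) unfolding Ncone_def exposed_face_def by auto
  have "g v = t * g u" using tu g_homog by simp
  also have "\<dots> \<le> t" using tu g_le_1[of u] by (simp add: mult_left_le)
  also have "t = p \<bullet> v" using tu by simp
  finally have "g v \<le> p \<bullet> v" .
  moreover have "p \<bullet> v \<le> g v" using assms(1) dP_def by blast
  ultimately show ?thesis by simp
next
  case False
  hence "v = 0" using assms(2) unfolding Ncone_def by simp
  thus ?thesis using g_zero by simp
qed

end

theorem mainTheorem7:
  fixes B :: "'a::euclidean_space set" and A C :: "'a set"
    and w :: "'a \<Rightarrow> real" and c :: "'a \<Rightarrow> 'a" and x :: 'a
  assumes "is_gauge_ball B"
    and "finite A"
    and "\<forall>a\<in>A. 0 < w a"
    and "sum w A = 1"
    and "C \<subseteq> A"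
    and "sum w C < 1 / (1 + skewness B)"
    and "fermat_weber_point B A (\<lambda>a. if a \<in> C then c a else a) w x"
  shows "x \<in> elementary_hull B (A - C)"
proof -
  interpret G: gb B by unfold_locales (rule assms(1))
  define pos where "pos = (\<lambda>a. if a \<in> C then c a else a)"
  define D where "D = A - C"
  define sg where "sg = skewness B"
  have sg0: "sg \<ge> 0" using G.skew(1) sg_def by simp
  have finD: "finite D" "finite C" using assms(2,5) finite_subset D_def by auto
  have "\<exists>p. (\<forall>i\<in>A. G.dP (p i) \<and> p i \<bullet> (x - pos i) = mink_gauge B (x - pos i)) \<and> (\<Sum>i\<in>A. w i *\<^sub>R p i) = 0"
    by (rule G.opt[OF assms(2,3)]) (use assms(7) in \<open>auto simp: fermat_weber_point_def pos_def\<close>)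
  then obtain p where p: "\<And>i. i \<in> A \<Longrightarrow> G.dP (p i)"
    "\<And>i. i \<in> A \<Longrightarrow> p i \<bullet> (x - pos i) = mink_gauge B (x - pos i)" "(\<Sum>i\<in>A. w i *\<^sub>R p i) = 0"
    by blast
  have Dsub: "D \<subseteq> A" "\<And>s. s \<in> D \<Longrightarrow> pos s = s" by (auto simp: D_def pos_def)
  define E where "E = elem_set B D p"
  have xE: "x \<in> E"
    unfolding E_def elem_set_def
  proof
    fix s assume s: "s \<in> D"
    have "x - s \<in> Ncone B (p s)"
      using G.ncone_mem[OF p(1) p(2)] s Dsub by fastforce
    hence "s + (x - s) \<in> (\<lambda>v. s + v) ` Ncone B (p s)" by blast
    thus "x \<in> (\<lambda>v. s + v) ` Ncone B (p s)" by simp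
  qed
  have ballp: "\<forall>s\<in>D. p s \<in> dual_ball B" using p(1) Dsub G.dP_ball by blast
  define wC where "wC = sum w C"
  define wD where "wD = sum w D"
  have wsum: "wD + wC = 1" using sum.subset_diff[OF assms(5,2), of w] assms(4) by (simp add: wD_def wC_def D_def)
  have wC0: "wC \<ge> 0" unfolding wC_def using assms(3,5) by (intro sum_nonneg) (auto simp: less_imp_le)
  have "wC * (1 + sg) < 1" using assms(6) sg0 by (simp add: wC_def sg_def less_divide_eq)
  hence pos_c: "wD - sg * wC > 0" using wsum by (simp add: algebra_simps)
  define K0 where "K0 = (\<Sum>s\<in>D. w s * mink_gauge B s) - (\<Sum>s\<in>D. w s * (p s \<bullet> s))"
  have sumsplit: "(\<Sum>i\<in>D. w i *\<^sub>R p i) = - (\<Sum>i\<in>C. w i *\<^sub>R p i)"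
    using sum.subset_diff[OF assms(5,2), of "\<lambda>i. w i *\<^sub>R p i"] p(3) by (simp add: D_def eq_neg_iff_add_eq_0)
  have gz: "(wD - sg * wC) * mink_gauge B z \<le> K0" if z: "z \<in> E" for z
  proof -
    have eqs: "p s \<bullet> (z - s) = mink_gauge B (z - s)" if s: "s \<in> D" for s
    proof -
      obtain v where "v \<in> Ncone B (p s)" "z = s + v" using z s unfolding E_def elem_set_def by blast
      thus ?thesis using G.ncone_prop[OF p(1)] s Dsub by auto
    qed
    have "(\<Sum>s\<in>D. w s * (p s \<bullet> z)) = (\<Sum>i\<in>D. w i *\<^sub>R p i) \<bullet> z"
      by (simp add: inner_sum_left)
    also have "\<dots> = (\<Sum>i\<in>C. w i * (p i \<bullet> (- z)))"
      unfolding sumsplit by (simp add: inner_sum_left inner_minus_right sum_negf)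
    also have "\<dots> \<le> (\<Sum>i\<in>C. w i * mink_gauge B (- z))"
    proof (rule sum_mono)
      fix i assume i: "i \<in> C"
      hence "i \<in> A" using assms(5) by blast
      have "p i \<bullet> (- z) \<le> mink_gauge B (- z)" using p(1)[OF \<open>i \<in> A\<close>] unfolding G.dP_def by blast
      thus "w i * (p i \<bullet> (- z)) \<le> w i * mink_gauge B (- z)"
        using \<open>i \<in> A\<close> assms(3) by (intro mult_left_mono) (auto simp: less_imp_le)
    qed
    also have "\<dots> = wC * mink_gauge B (- z)" by (simp add: wC_def sum_distrib_right)
    also have "\<dots> \<le> wC * (sg * mink_gauge B z)"
      using G.skew(2)[of z] wC0 by (simp add: sg_def mult_left_mono)
    finally have up: "(\<Sum>s\<in>D. w s * (p s \<bullet> z)) \<le> sg * wC * mink_gauge B z" by (simp add: algebra_simps)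
    have "(\<Sum>s\<in>D. w s * (mink_gauge B z - mink_gauge B s)) \<le> (\<Sum>s\<in>D. w s * mink_gauge B (z - s))"
    proof (rule sum_mono)
      fix s assume s: "s \<in> D"
      have "mink_gauge B z \<le> mink_gauge B (z - s) + mink_gauge B s" using G.g_subadd[of "z - s" s] by simp
      thus "w s * (mink_gauge B z - mink_gauge B s) \<le> w s * mink_gauge B (z - s)"
        using s Dsub assms(3) by (intro mult_left_mono) (auto simp: less_imp_le)
    qed
    also have "\<dots> = (\<Sum>s\<in>D. w s * (p s \<bullet> z)) - (\<Sum>s\<in>D. w s * (p s \<bullet> s))"
    proof -
      have "(\<Sum>s\<in>D. w s * mink_gauge B (z - s)) = (\<Sum>s\<in>D. w s * (p s \<bullet> z) - w s * (p s \<bullet> s))"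
        by (intro sum.cong refl) (metis eqs inner_diff_right right_diff_distrib)
      thus ?thesis by (simp add: sum_subtractf)
    qed
    finally have "wD * mink_gauge B z - (\<Sum>s\<in>D. w s * mink_gauge B s) \<le> sg * wC * mink_gauge B z - (\<Sum>s\<in>D. w s * (p s \<bullet> s))"
      using up by (simp add: right_diff_distrib sum_subtractf wD_def sum_distrib_right)
    thus ?thesis unfolding K0_def by (simp add: algebra_simps)
  qed
  have bE: "bounded E"
    unfolding bounded_iff
  proof (intro exI ballI)
    fix z assume "z \<in> E"
    hence "mink_gauge B z \<le> K0 / (wD - sg * wC)" using gz pos_c by (simp add: le_divide_eq mult.commute)
    thus "norm z \<le> G.R * (K0 / (wD - sg * wC))"
      using G.g_lower[of z] G.R(1) by (meson mult_left_mono less_imp_le order_trans)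
  qed
  have "E \<in> {elem_set B (A - C) p | p. (\<forall>s\<in>A - C. p s \<in> dual_ball B) \<and> elem_set B (A - C) p \<noteq> {} \<and> bounded (elem_set B (A - C) p)}"
    using ballp xE bE unfolding E_def D_def by blast
  thus ?thesis unfolding elementary_hull_def using xE by blast
qed

end
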